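(* Let $n \geq 2$ be an integer and let $t$ be an integer with $3 \leq t \leq n+1$. Let $\mathbf{v} \in \mathbb{Z}^t$ be a vector whose first entry $\mathbf{v}(1)$ is nonzero. Then the set $T(n,t,\mathbf{v})$ is finite.
   Context: A nonzero polynomial in $\mathbb{R}[x]$ is real-rooted if all its complex roots are real. For $\mathbf{v}\in\mathbb{Z}^t$ with entries $\mathbf{v}(1),\dots,\mathbf{v}(t)$, $T(n,t,\mathbf{v})$ denotes the set of all real-rooted polynomials $p(x) = \sum_{i=0}^n a_i x^{n-i} \in \mathbb{Z}[x]$ of degree $n$ such that $a_{i-1} = \mathbf{v}(i)$ for all $i \in \{1,\dots,t\}$. *)

theory Defs
  imports "HOL-Computational_Algebra.Polynomial" Complex_Main
begin

definition real_rooted :: "real poly \<Rightarrow> bool" where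
  "real_rooted p \<longleftrightarrow> p \<noteq> 0 \<and>
     (\<forall>z::complex. poly (map_poly complex_of_real p) z = 0 \<longrightarrow> z \<in> \<real>)"

text \<open>T(n,t,v): integer real-rooted polynomials p = sum_{i=0}^n a_i x^(n-i) of degree n
  with a_(i-1) = v(i) for i in 1..t. Here a_i = coeff p (n - i).\<close>
definition T :: "nat \<Rightarrow> nat \<Rightarrow> (nat \<Rightarrow> int) \<Rightarrow> int poly set" where
  "T n t v = {p :: int poly. degree p = n \<and> real_rooted (map_poly real_of_int p) \<and>
     (\<forall>i\<in>{1..t}. coeff p (n - (i - 1)) = v i)}"

end

theory Submission
  imports Defs "HOL-Computational_Algebra.Fundamental_Theorem_Algebra"
begin

definition Q :: "'a::comm_ring_1 list \<Rightarrow> 'a poly" where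
  "Q as = prod_list (map (\<lambda>a. [:-a,1:]) as)"

lemma Q_Nil [simp]: "Q [] = 1"
  by (simp add: Q_def)

lemma Q_Cons: "Q (a # as) = pCons 0 (Q as) - smult a (Q as)"
  by (simp add: Q_def mult_pCons_left)

lemma coeff_Q_Cons: "coeff (Q (a # as)) k = (case k of 0 \<Rightarrow> 0 | Suc j \<Rightarrow> coeff (Q as) j) - a * coeff (Q as) k"
  by (simp add: Q_Cons coeff_pCons split: nat.split)

lemma coeff_Q_high: "length as < k \<Longrightarrow> coeff (Q as) k = 0"
  by (induction as arbitrary: k) (auto simp: coeff_Q_Cons split: nat.split)

lemma coeff_Q_len: "coeff (Q as) (length as) = 1"
  by (induction as) (auto simp: coeff_Q_Cons coeff_Q_high)

lemma coeff_Q_1: "length as = Suc m \<Longrightarrow> coeff (Q as) m = - sum_list as"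
proof (induction as arbitrary: m)
  case Nil then show ?case by simp
next
  case (Cons a bs)
  show ?case
  proof (cases m)
    case 0
    then show ?thesis using Cons by (simp add: coeff_Q_Cons)
  next
    case (Suc m')
    then show ?thesis using Cons coeff_Q_len[of bs] by (simp add: coeff_Q_Cons)
  qed
qed

lemma coeff_Q_2: "length as = Suc (Suc m) \<Longrightarrow>
   2 * coeff (Q as) m = (sum_list as)^2 - sum_list (map (\<lambda>a. a^2) as)"
proof (induction as arbitrary: m)
  case Nil then show ?case by simp
next
  case (Cons a bs)
  have B: "coeff (Q bs) m = - sum_list bs" using Cons.prems by (intro coeff_Q_1) simp
  show ?case
  proof (cases m)
    case 0
    then obtain b where "bs = [b]" using Cons.prems by (cases bs) auto
    then show ?thesis using 0 B by (simp add: coeff_Q_Cons power2_eq_square algebra_simps)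
  next
    case (Suc m')
    have "2 * coeff (Q bs) m' = (sum_list bs)^2 - sum_list (map (\<lambda>a. a^2) bs)"
      using Cons Suc by simp
    then show ?thesis using Suc B by (simp add: coeff_Q_Cons power2_eq_square algebra_simps)
  qed
qed

lemma coeff_Q_bound:
  fixes as :: "complex list"
  assumes "\<forall>a\<in>set as. norm a \<le> B" "B \<ge> 0"
  shows "norm (coeff (Q as) k) \<le> (1 + B) ^ length as"
  using assms
proof (induction as arbitrary: k)
  case Nil then show ?case by simp
next
  case (Cons a bs)
  have h1: "norm (case k of 0 \<Rightarrow> 0 | Suc j \<Rightarrow> coeff (Q bs) j) \<le> (1+B)^length bs"
    using Cons by (auto split: nat.split)
  have h2: "norm (a * coeff (Q bs) k) \<le> B * (1+B)^length bs"
    using Cons by (simp add: norm_mult mult_mono)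
  have "norm (coeff (Q (a#bs)) k) \<le> (1+B)^length bs + B * (1+B)^length bs"
    unfolding coeff_Q_Cons using h1 h2 norm_triangle_ineq4 by (smt (verit))
  then show ?case by (simp add: algebra_simps)
qed

lemma poly_Q_root: "r \<in> set as \<Longrightarrow> poly (Q as) r = 0"
  by (induction as) (auto simp: Q_Cons algebra_simps)

lemma decomp:
  fixes p :: "complex poly"
  obtains rs where "p = smult (lead_coeff p) (Q rs)" "length rs = degree p"
proof -
  obtain roots where roots: "mset roots = proots p"
    using ex_mset by blast
  have "p = smult (lead_coeff p) (\<Prod>x\<in>#proots p. [:-x, 1:])"
    by (rule complex_poly_decompose_multiset [symmetric])
  also have "(\<Prod>x\<in>#proots p. [:-x, 1:]) = Q roots"
    unfolding Q_def by (subst prod_mset_prod_list [symmetric]) (simp add: roots)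
  finally have "p = smult (lead_coeff p) (Q roots)" .
  moreover have "length roots = degree p"
    using roots size_proots_complex[of p] by (metis size_mset)
  ultimately show ?thesis using that by blast
qed

lemma finite_bounded_int_polys:
  "finite {p :: int poly. degree p \<le> n \<and> (\<forall>k. \<bar>coeff p k\<bar> \<le> N)}"
proof -
  have "{p :: int poly. degree p \<le> n \<and> (\<forall>k. \<bar>coeff p k\<bar> \<le> N)}
     \<subseteq> Poly ` {xs. set xs \<subseteq> {-N..N} \<and> length xs = Suc n}"
  proof
    fix p :: "int poly" assume p: "p \<in> {p. degree p \<le> n \<and> (\<forall>k. \<bar>coeff p k\<bar> \<le> N)}"
    let ?xs = "map (coeff p) [0..<Suc n]"
    have "Poly ?xs = p"
      by (rule poly_eqI) (use p in \<open>auto simp: nth_default_def not_less simp del: upt_Suc intro!: coeff_eq_0\<close>)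
    moreover have "set ?xs \<subseteq> {-N..N}" proof (clarsimp simp del: upt_Suc) fix k from p have "\<bar>coeff p k\<bar> \<le> N" by blast then show "- N \<le> coeff p k \<and> coeff p k \<le> N" by linarith qed
    ultimately show "p \<in> Poly ` {xs. set xs \<subseteq> {-N..N} \<and> length xs = Suc n}"
      by (intro image_eqI[of _ _ ?xs]) auto
  qed
  moreover have "finite (Poly ` {xs. set xs \<subseteq> {-N..N} \<and> length xs = Suc n})"
    by (intro finite_imageI finite_lists_length_eq) auto
  ultimately show ?thesis by (rule finite_subset)
qed

lemma T_bound:
  fixes n t :: nat and v :: "nat \<Rightarrow> int"
  assumes "n \<ge> 2" and "3 \<le> t" and "v 1 \<noteq> 0" and pT: "p \<in> T n t v"
  defines "S \<equiv> (of_int (v 2) / of_int (v 1))^2 - 2 * (of_int (v 3) / of_int (v 1)) :: complex"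
  shows "\<bar>coeff p k\<bar> \<le> \<lfloor>\<bar>v 1\<bar> * (1 + sqrt \<bar>Re S\<bar>) ^ n\<rfloor>"
proof -
  have degp: "degree p = n" and rr: "real_rooted (map_poly real_of_int p)"
    and cf: "\<And>i. i \<in> {1..t} \<Longrightarrow> coeff p (n - (i - 1)) = v i"
    using pT by (auto simp: T_def)
  have c0: "coeff p n = v 1" using cf[of 1] assms by auto
  have c1: "coeff p (n - 1) = v 2" using cf[of 2] assms by auto
  have c2: "coeff p (n - 2) = v 3" using cf[of 3] assms by auto
  define pc where "pc = map_poly complex_of_real (map_poly real_of_int p)"
  have pc_eq: "pc = map_poly complex_of_int p"
    unfolding pc_def by (subst map_poly_map_poly) (auto simp: o_def)
  have cpc: "coeff pc k = of_int (coeff p k)" for k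
    unfolding pc_eq by (simp add: coeff_map_poly)
  have degpc: "degree pc = n" unfolding pc_eq using degp by (subst degree_map_poly) auto
  have lc: "lead_coeff pc = of_int (v 1)" using degpc cpc c0 by simp
  obtain rs where rs: "pc = smult (lead_coeff pc) (Q rs)" "length rs = n"
    using decomp[of pc] degpc by metis
  have v1: "(of_int (v 1) :: complex) \<noteq> 0" using assms by simp
  have cQ: "coeff (Q rs) k = of_int (coeff p k) / of_int (v 1)" for k
  proof -
    have "coeff pc k = of_int (v 1) * coeff (Q rs) k" using rs lc by (metis coeff_smult)
    then show ?thesis using v1 cpc by (simp add: field_simps)
  qed
  have realr: "r \<in> \<real>" if "r \<in> set rs" for r
  proof -
    have "poly pc r = 0" using rs(1) poly_Q_root[OF that] by (metis mult_zero_right poly_smult)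
    then show ?thesis using rr unfolding real_rooted_def pc_def by blast
  qed
  have s1': "- sum_list rs = (of_int (v 2) / of_int (v 1))"
    using coeff_Q_1[of rs "n - 1"] rs(2) assms cQ[of "n - 1"] c1 by simp
  then have s1: "sum_list rs = - (of_int (v 2) / of_int (v 1))" by (metis minus_minus)
  have s2: "2 * (of_int (v 3) / of_int (v 1)) = (sum_list rs)^2 - sum_list (map (\<lambda>a. a^2) rs)"
    using coeff_Q_2[of rs "n - 2"] rs(2) assms cQ[of "n - 2"] c2
    by (metis Suc_diff_Suc add_2_eq_Suc diff_diff_left le_add_diff_inverse numeral_2_eq_2 one_add_one)
  have sq: "sum_list (map (\<lambda>a. a^2) rs) = S"
    using s1 s2 unfolding S_def by (simp add: power2_eq_square algebra_simps)
  have sqR: "sum_list (map (\<lambda>a. a^2) rs) = of_real (sum_list (map (\<lambda>a. (Re a)^2) rs))"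
    using realr
  proof (induction rs)
    case Nil then show ?case by simp
  next
    case (Cons a bs)
    have "a = of_real (Re a)" using Cons.prems by (simp add: Reals_def)
    then have "a^2 = of_real ((Re a)^2)" by (metis of_real_power)
    then show ?case using Cons by simp
  qed
  have ReS: "Re S = sum_list (map (\<lambda>a. (Re a)^2) rs)" using sq sqR by (metis Re_complex_of_real)
  have B: "norm r \<le> sqrt \<bar>Re S\<bar>" if "r \<in> set rs" for r
  proof -
    have "(Re r)^2 \<le> sum_list (map (\<lambda>a. (Re a)^2) rs)"
      using that by (intro member_le_sum_list) auto
    then have "(Re r)^2 \<le> \<bar>Re S\<bar>" using ReS by simp
    then have "\<bar>Re r\<bar> \<le> sqrt \<bar>Re S\<bar>" by (simp add: real_le_rsqrt)
    moreover have "norm r = \<bar>Re r\<bar>" using realr[OF that]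
      by (metis Re_complex_of_real Reals_cases norm_of_real)
    ultimately show ?thesis by simp
  qed
  have "norm (coeff (Q rs) k) \<le> (1 + sqrt \<bar>Re S\<bar>) ^ n"
    using coeff_Q_bound[of rs "sqrt \<bar>Re S\<bar>" k] B rs(2) by auto
  moreover have "norm (coeff (Q rs) k) = \<bar>real_of_int (coeff p k)\<bar> / \<bar>real_of_int (v 1)\<bar>"
    using cQ[of k] by (simp add: norm_divide)
  ultimately have "\<bar>real_of_int (coeff p k)\<bar> \<le> \<bar>real_of_int (v 1)\<bar> * (1 + sqrt \<bar>Re S\<bar>) ^ n"
    using assms by (simp add: divide_le_eq mult.commute)
  then show ?thesis by (simp add: le_floor_iff)
qed

theorem proposition2p9:
  fixes n t :: nat and v :: "nat \<Rightarrow> int"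
  assumes "n \<ge> 2" and "3 \<le> t" and "t \<le> n + 1" and "v 1 \<noteq> 0"
  shows "finite (T n t v)"
proof -
  define S where "S \<equiv> (of_int (v 2) / of_int (v 1))^2 - 2 * (of_int (v 3) / of_int (v 1)) :: complex"
  let ?N = "\<lfloor>\<bar>v 1\<bar> * (1 + sqrt \<bar>Re S\<bar>) ^ n\<rfloor>"
  have "T n t v \<subseteq> {p :: int poly. degree p \<le> n \<and> (\<forall>k. \<bar>coeff p k\<bar> \<le> ?N)}"
    using T_bound[of n t v] assms unfolding S_def by (auto simp: T_def)
  then show ?thesis using finite_bounded_int_polys finite_subset by blast
qed

end
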